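(* Let $f:2^{\mathcal{E}_x}\to\mathbb{R}_{\ge 0}$ be normalized, monotone and submodular, let $\Delta\ge1$ be the maximum vertex degree of $\mathcal{G}$, and consider $(\mathrm{P}_1)$ under the constraint TU$_b$ (i.e., maximize $f(\mathcal{E})$ over $\mathcal{E}\subseteq\mathcal{E}_x$ with $|\mathcal{E}|\le k$ and some vertex cover $\mathcal{V}$ of $\mathcal{E}$ with $|\mathcal{V}|\le b$), with optimal value $\mathrm{OPT}_1$. Then the algorithm Vertex-Greedy (described in the context) returns a feasible solution $\mathcal{E}_{\mathrm{grd}}$ of this problem with $f(\mathcal{E}_{\mathrm{grd}})\ge\alpha_v(b,k,\Delta)\cdot\mathrm{OPT}_1$, where $\alpha_v(b,k,\Delta)=1-\exp\big(-\min\{1,\lfloor k/\Delta\rfloor/b\}\big)$.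
   Context: $\mathcal{G}=(\mathcal{V}_x,\mathcal{E}_x)$ is a finite simple undirected graph; $b,k\ge1$ are integers. For $\mathcal{V}\subseteq\mathcal{V}_x$, $\mathsf{edges}(\mathcal{V})$ is the set of edges incident to at least one vertex of $\mathcal{V}$. A set function $h$ is normalized if $h(\varnothing)=0$, monotone if $h(A)\le h(B)$ for $A\subseteq B$, submodular if $h(A)+h(B)\ge h(A\cup B)+h(A\cap B)$. Vertex-Greedy: let $h(\mathcal{V})=f(\mathsf{edges}(\mathcal{V}))$. Start with $\mathcal{V}_{\mathrm{grd}}=\varnothing$ and repeat: pick $v^\star\in\arg\max_{v\in\mathcal{V}_x\setminus\mathcal{V}_{\mathrm{grd}}}h(\mathcal{V}_{\mathrm{grd}}\cup\{v\})$; if $|\mathcal{V}_{\mathrm{grd}}\cup\{v^\star\}|>b$ or $|\mathsf{edges}(\mathcal{V}_{\mathrm{grd}}\cup\{v^\star\})|>k$ (or no vertex remains), stop; otherwise set $\mathcal{V}_{\mathrm{grd}}\leftarrow\mathcal{V}_{\mathrm{grd}}\cup\{v^\star\}$. Return $\mathcal{V}_{\mathrm{grd}}$ and $\mathcal{E}_{\mathrm{grd}}=\mathsf{edges}(\mathcal{V}_{\mathrm{grd}})$. *)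

theory Defs
  imports Complex_Main
begin

definition simple_graph :: "'a set \<Rightarrow> 'a set set \<Rightarrow> bool" where
  "simple_graph V E \<longleftrightarrow> finite V \<and>
     (\<forall>e\<in>E. \<exists>u v. u \<in> V \<and> v \<in> V \<and> u \<noteq> v \<and> e = {u, v})"

definition edges_of :: "'a set set \<Rightarrow> 'a set \<Rightarrow> 'a set set" where
  "edges_of E S = {e \<in> E. e \<inter> S \<noteq> {}}"

definition degree :: "'a set set \<Rightarrow> 'a \<Rightarrow> nat" where
  "degree E v = card {e \<in> E. v \<in> e}"

definition max_degree :: "'a set \<Rightarrow> 'a set set \<Rightarrow> nat" where
  "max_degree V E = Max (degree E ` V)"

definition normalized :: "('b set \<Rightarrow> real) \<Rightarrow> bool" where
  "normalized f \<longleftrightarrow> f {} = 0"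

definition monotone_set_fun :: "'b set \<Rightarrow> ('b set \<Rightarrow> real) \<Rightarrow> bool" where
  "monotone_set_fun X f \<longleftrightarrow> (\<forall>A B. A \<subseteq> B \<longrightarrow> B \<subseteq> X \<longrightarrow> f A \<le> f B)"

definition submodular_set_fun :: "'b set \<Rightarrow> ('b set \<Rightarrow> real) \<Rightarrow> bool" where
  "submodular_set_fun X f \<longleftrightarrow>
     (\<forall>A B. A \<subseteq> X \<longrightarrow> B \<subseteq> X \<longrightarrow> f A + f B \<ge> f (A \<union> B) + f (A \<inter> B))"

definition nonneg_set_fun :: "'b set \<Rightarrow> ('b set \<Rightarrow> real) \<Rightarrow> bool" where
  "nonneg_set_fun X f \<longleftrightarrow> (\<forall>A. A \<subseteq> X \<longrightarrow> f A \<ge> 0)"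

definition is_vertex_cover :: "'a set \<Rightarrow> 'a set set \<Rightarrow> 'a set \<Rightarrow> bool" where
  "is_vertex_cover V Ed Vc \<longleftrightarrow> Vc \<subseteq> V \<and> (\<forall>e\<in>Ed. e \<inter> Vc \<noteq> {})"

definition feasible_TU :: "'a set \<Rightarrow> 'a set set \<Rightarrow> nat \<Rightarrow> nat \<Rightarrow> 'a set set \<Rightarrow> bool" where
  "feasible_TU V E b k Ed \<longleftrightarrow> Ed \<subseteq> E \<and> card Ed \<le> k \<and>
     (\<exists>Vc. is_vertex_cover V Ed Vc \<and> card Vc \<le> b)"

definition OPT1 :: "'a set \<Rightarrow> 'a set set \<Rightarrow> ('a set set \<Rightarrow> real) \<Rightarrow> nat \<Rightarrow> nat \<Rightarrow> real" where
  "OPT1 V E f b k = Max (f ` {Ed. feasible_TU V E b k Ed})"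

text \<open>Vertex-Greedy. h(S) = f(edges(S)); argmax choices are arbitrary (any tie-breaking).\<close>
definition vg_h :: "'a set set \<Rightarrow> ('a set set \<Rightarrow> real) \<Rightarrow> 'a set \<Rightarrow> real" where
  "vg_h E f S = f (edges_of E S)"

definition vg_argmax :: "'a set \<Rightarrow> 'a set set \<Rightarrow> ('a set set \<Rightarrow> real) \<Rightarrow> 'a set \<Rightarrow> 'a \<Rightarrow> bool" where
  "vg_argmax V E f S v \<longleftrightarrow> v \<in> V - S \<and>
     (\<forall>w\<in>V - S. vg_h E f (insert w S) \<le> vg_h E f (insert v S))"

text \<open>vs is the sequence of vertices accepted by some execution of Vertex-Greedy:
  each accepted vertex is a maximizer and keeps both budgets; the run stops either when
  no vertex remains or when the chosen maximizer would violate a budget.\<close>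
definition vertex_greedy_run ::
  "'a set \<Rightarrow> 'a set set \<Rightarrow> ('a set set \<Rightarrow> real) \<Rightarrow> nat \<Rightarrow> nat \<Rightarrow> 'a list \<Rightarrow> bool" where
  "vertex_greedy_run V E f b k vs \<longleftrightarrow>
     distinct vs \<and>
     (\<forall>i < length vs. vg_argmax V E f (set (take i vs)) (vs ! i) \<and>
        card (set (take (Suc i) vs)) \<le> b \<and>
        card (edges_of E (set (take (Suc i) vs))) \<le> k) \<and>
     (V - set vs = {} \<or>
      (\<exists>v. vg_argmax V E f (set vs) v \<and>
         (card (insert v (set vs)) > b \<or> card (edges_of E (insert v (set vs))) > k)))"

end

theory Submission
  imports Defs
begin

lemma edges_sub: "edges_of E S \<subseteq> E" unfolding edges_of_def by blast

lemma edges_mono: "A \<subseteq> B \<Longrightarrow> edges_of E A \<subseteq> edges_of E B" unfolding edges_of_def by blast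

lemma h_mono:
  assumes "monotone_set_fun E f" "A \<subseteq> B"
  shows "f (edges_of E A) \<le> f (edges_of E B)"
  using assms(1) edges_mono[OF assms(2)] edges_sub unfolding monotone_set_fun_def by metis

lemma h_submod:
  assumes "monotone_set_fun E f" "submodular_set_fun E f"
  shows "f (edges_of E A) + f (edges_of E B) \<ge> f (edges_of E (A \<union> B)) + f (edges_of E (A \<inter> B))"
proof -
  have u: "edges_of E (A \<union> B) = edges_of E A \<union> edges_of E B" unfolding edges_of_def by blast
  have i: "edges_of E (A \<inter> B) \<subseteq> edges_of E A \<inter> edges_of E B" unfolding edges_of_def by blast
  have "f (edges_of E A) + f (edges_of E B) \<ge> f (edges_of E A \<union> edges_of E B) + f (edges_of E A \<inter> edges_of E B)"
    using assms(2) edges_sub unfolding submodular_set_fun_def by metis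
  moreover have "f (edges_of E (A \<inter> B)) \<le> f (edges_of E A \<inter> edges_of E B)"
  proof -
    have "edges_of E A \<inter> edges_of E B \<subseteq> E" using edges_sub by blast
    thus ?thesis using assms(1) i unfolding monotone_set_fun_def by metis
  qed
  ultimately show ?thesis using u by simp
qed

lemma h_sum:
  assumes "monotone_set_fun E f" "submodular_set_fun E f" "finite T"
  shows "f (edges_of E (S \<union> T)) \<le> f (edges_of E S) + (\<Sum>t\<in>T. f (edges_of E (insert t S)) - f (edges_of E S))"
  using assms(3)
proof (induction T rule: finite_induct)
  case empty then show ?case by simp
next
  case (insert t T)
  have "f (edges_of E (insert t S)) + f (edges_of E (S \<union> T)) \<ge>
        f (edges_of E (insert t S \<union> (S \<union> T))) + f (edges_of E (insert t S \<inter> (S \<union> T)))"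
    by (rule h_submod[OF assms(1,2)])
  moreover have "insert t S \<union> (S \<union> T) = S \<union> insert t T" by blast
  moreover have "insert t S \<inter> (S \<union> T) = S" using insert(2) by blast
  ultimately show ?case using insert by simp
qed

lemma card_edges_le:
  assumes "finite S" "S \<subseteq> V" "finite V"
  shows "card (edges_of E S) \<le> card S * max_degree V E"
proof -
  have "edges_of E S = (\<Union>v\<in>S. {e\<in>E. v \<in> e})" unfolding edges_of_def by blast
  hence "card (edges_of E S) \<le> (\<Sum>v\<in>S. card {e\<in>E. v \<in> e})"
    using card_UN_le[OF assms(1)] by simp
  also have "\<dots> \<le> (\<Sum>v\<in>S. max_degree V E)"
  proof (rule sum_mono)
    fix v assume "v \<in> S"
    hence "v \<in> V" using assms by blast
    thus "card {e\<in>E. v \<in> e} \<le> max_degree V E"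
      unfolding max_degree_def degree_def using assms(3) by (simp add: Max_ge)
  qed
  finally show ?thesis by simp
qed

theorem lemma4:
  fixes V :: "'a set" and E :: "'a set set" and f :: "'a set set \<Rightarrow> real"
    and b k :: nat and vs :: "'a list"
  assumes "simple_graph V E"
    and "b \<ge> 1" and "k \<ge> 1"
    and "normalized f" and "monotone_set_fun E f" and "submodular_set_fun E f"
    and "nonneg_set_fun E f"
    and "max_degree V E \<ge> 1"
    and "vertex_greedy_run V E f b k vs"
  shows "feasible_TU V E b k (edges_of E (set vs)) \<and>
         f (edges_of E (set vs)) \<ge>
           (1 - exp (- min 1 (of_int \<lfloor>real k / real (max_degree V E)\<rfloor> / real b)))
             * OPT1 V E f b k"
proof -
  define h where "h = (\<lambda>S. f (edges_of E S))"
  define D where "D = max_degree V E"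
  define L where "L = min b (k div D)"
  have finV: "finite V" using assms(1) by (simp add: simple_graph_def)
  have sg: "\<forall>e\<in>E. \<exists>u w. u \<in> V \<and> w \<in> V \<and> u \<noteq> w \<and> e = {u, w}"
    using assms(1) by (simp add: simple_graph_def)
  have EV: "E \<subseteq> Pow V"
  proof
    fix e assume "e \<in> E"
    then obtain u w where "u \<in> V" "w \<in> V" "e = {u, w}" using sg by blast
    thus "e \<in> Pow V" by simp
  qed
  have finE: "finite E" using finite_subset[OF EV] finV by simp
  have run: "distinct vs"
    "\<And>i. i < length vs \<Longrightarrow> vg_argmax V E f (set (take i vs)) (vs ! i) \<and>
        card (set (take (Suc i) vs)) \<le> b \<and>
        card (edges_of E (set (take (Suc i) vs))) \<le> k"
    "V - set vs = {} \<or>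
      (\<exists>v. vg_argmax V E f (set vs) v \<and>
         (card (insert v (set vs)) > b \<or> card (edges_of E (insert v (set vs))) > k))"
    using assms(9) unfolding vertex_greedy_run_def by blast+
  have vsV: "set vs \<subseteq> V"
  proof
    fix x assume "x \<in> set vs"
    then obtain i where i: "i < length vs" "x = vs ! i" by (metis in_set_conv_nth)
    have "vg_argmax V E f (set (take i vs)) (vs ! i)" using run(2)[OF i(1)] by simp
    thus "x \<in> V" using i(2) unfolding vg_argmax_def by simp
  qed
  have fmono: "\<And>A B. A \<subseteq> B \<Longrightarrow> B \<subseteq> E \<Longrightarrow> f A \<le> f B"
    using assms(5) unfolding monotone_set_fun_def by simp
  have hmono: "\<And>A B. A \<subseteq> B \<Longrightarrow> h A \<le> h B" unfolding h_def by (rule h_mono[OF assms(5)])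
  have h0: "h {} = 0" unfolding h_def edges_of_def using assms(4) by (simp add: normalized_def)
  have hnn: "\<And>A. h A \<ge> 0" using hmono h0 by (metis empty_subsetI)
  have cardb: "card (set vs) \<le> b" and cardk: "card (edges_of E (set vs)) \<le> k"
  proof -
    have "card (set vs) \<le> b \<and> card (edges_of E (set vs)) \<le> k"
    proof (cases "vs = []")
      case True thus ?thesis by (simp add: edges_of_def)
    next
      case False
      hence "length vs - 1 < length vs" "Suc (length vs - 1) = length vs" by auto
      thus ?thesis using run(2)[of "length vs - 1"] by simp
    qed
    thus "card (set vs) \<le> b" "card (edges_of E (set vs)) \<le> k" by auto
  qed
  have feas: "feasible_TU V E b k (edges_of E (set vs))"
    unfolding feasible_TU_def is_vertex_cover_def using cardb cardk vsV
    by (auto simp: edges_of_def)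
  define F where "F = {Ed. feasible_TU V E b k Ed}"
  have Fsub: "F \<subseteq> Pow E" unfolding F_def feasible_TU_def by blast
  have finF: "finite F" using finite_subset[OF Fsub] finE by simp
  have "{} \<in> F" unfolding F_def feasible_TU_def is_vertex_cover_def by auto
  hence "OPT1 V E f b k \<in> f ` F" unfolding OPT1_def F_def[symmetric] using finF
    by (intro Max_in) auto
  then obtain Ed where Ed: "feasible_TU V E b k Ed" "f Ed = OPT1 V E f b k"
    by (auto simp: F_def)
  then obtain Oc where Oc: "Oc \<subseteq> V" "\<forall>e\<in>Ed. e \<inter> Oc \<noteq> {}" "card Oc \<le> b"
    unfolding feasible_TU_def is_vertex_cover_def by blast
  have "Ed \<subseteq> edges_of E Oc" using Ed(1) Oc(2) unfolding feasible_TU_def edges_of_def by blast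
  hence "f Ed \<le> f (edges_of E Oc)"
    by (rule fmono[OF _ edges_sub])
  hence OPTle: "OPT1 V E f b k \<le> h Oc" using Ed(2) unfolding h_def by simp
  have OPTnn: "OPT1 V E f b k \<ge> 0"
    using Ed assms(7) unfolding nonneg_set_fun_def feasible_TU_def by (metis (no_types))
  have finO: "finite Oc" using finite_subset[OF Oc(1) finV] .
  have step: "h Oc - h (set (take (Suc i) vs)) \<le> (1 - 1 / real b) * (h Oc - h (set (take i vs)))"
    if i: "i < length vs" for i
  proof -
    let ?S = "set (take i vs)"
    have am: "vg_argmax V E f ?S (vs ! i)" using run(2)[OF i] by simp
    have tk: "set (take (Suc i) vs) = insert (vs ! i) ?S"
      using i by (simp add: take_Suc_conv_app_nth)
    have gain: "h (insert o' ?S) - h ?S \<le> h (set (take (Suc i) vs)) - h ?S" if "o' \<in> Oc - ?S" for o'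
    proof -
      have "o' \<in> V - ?S" using that Oc(1) by blast
      hence "vg_h E f (insert o' ?S) \<le> vg_h E f (insert (vs ! i) ?S)"
        using am unfolding vg_argmax_def by simp
      thus ?thesis using tk unfolding vg_h_def h_def by simp
    qed
    have gnn: "0 \<le> h (set (take (Suc i) vs)) - h ?S" using hmono tk by (simp add: subset_insertI)
    have "h Oc \<le> h (?S \<union> (Oc - ?S))" by (rule hmono) blast
    also have "\<dots> \<le> h ?S + (\<Sum>t\<in>Oc - ?S. h (insert t ?S) - h ?S)"
      unfolding h_def using h_sum[OF assms(5,6)] finO by blast
    also have "\<dots> \<le> h ?S + (\<Sum>t\<in>Oc - ?S. h (set (take (Suc i) vs)) - h ?S)"
      using gain by (intro add_left_mono sum_mono) simp
    also have "\<dots> = h ?S + real (card (Oc - ?S)) * (h (set (take (Suc i) vs)) - h ?S)" by simp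
    also have "\<dots> \<le> h ?S + real b * (h (set (take (Suc i) vs)) - h ?S)"
    proof -
      have "card (Oc - ?S) \<le> b" proof -
        have "card (Oc - ?S) \<le> card Oc" by (rule card_mono[OF finO]) blast
        thus ?thesis using Oc(3) by linarith
      qed
      thus ?thesis using gnn by (simp add: mult_right_mono)
    qed
    finally have *: "h Oc - h ?S \<le> real b * (h (set (take (Suc i) vs)) - h ?S)" by simp
    have bpos: "real b > 0" using assms(2) by simp
    have "(1 - 1 / real b) * (h Oc - h ?S) = (h Oc - h ?S) - (h Oc - h ?S) / real b"
      by (simp add: left_diff_distrib)
    moreover have "(h Oc - h ?S) / real b \<le> h (set (take (Suc i) vs)) - h ?S"
      using * bpos by (simp add: divide_le_eq mult.commute)
    ultimately show ?thesis by linarith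
  qed
  have iter: "i \<le> length vs \<Longrightarrow> h Oc - h (set (take i vs)) \<le> (1 - 1 / real b) ^ i * h Oc" for i
  proof (induction i)
    case 0 thus ?case using h0 by simp
  next
    case (Suc i)
    have c: "0 \<le> 1 - 1 / real b" using assms(2) by simp
    have "h Oc - h (set (take (Suc i) vs)) \<le> (1 - 1 / real b) * (h Oc - h (set (take i vs)))"
      using step Suc by simp
    also have "\<dots> \<le> (1 - 1 / real b) * ((1 - 1 / real b) ^ i * h Oc)"
      using Suc c by (simp add: mult_left_mono)
    finally show ?case by simp
  qed
  have Dpos: "D \<ge> 1" using assms(8) D_def by simp
  have fl: "of_int \<lfloor>real k / real D\<rfloor> = real (k div D)"
    by (simp add: floor_divide_of_nat_eq)
  have mn: "min 1 (real (k div D) / real b) = real L / real b"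
    unfolding L_def using assms(2) by (auto simp: min_def field_simps)
  define \<alpha> where "\<alpha> = 1 - exp (- (real L / real b))"
  have goal_eq: "(1 - exp (- min 1 (of_int \<lfloor>real k / real (max_degree V E)\<rfloor> / real b))) = \<alpha>"
    using fl mn unfolding \<alpha>_def D_def by simp
  have \<alpha>le: "\<alpha> \<le> 1" unfolding \<alpha>_def by simp
  have "f (edges_of E (set vs)) \<ge> \<alpha> * OPT1 V E f b k"
  proof (cases "V - set vs = {}")
    case True
    have "e \<inter> set vs \<noteq> {}" if "e \<in> E" for e
    proof -
      have "\<exists>u w. u \<in> V \<and> w \<in> V \<and> u \<noteq> w \<and> e = {u, w}" using sg that by simp
      then obtain u w where "u \<in> V" "e = {u, w}" by auto
      moreover have "u \<in> set vs" using True \<open>u \<in> V\<close> by blast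
      ultimately show ?thesis by simp
    qed
    hence "edges_of E (set vs) = E" unfolding edges_of_def by auto
    moreover have "Ed \<subseteq> E" using Ed(1) unfolding feasible_TU_def by simp
    ultimately have "f (edges_of E (set vs)) \<ge> OPT1 V E f b k"
      using Ed(2) fmono[of Ed E] by simp
    moreover have "\<alpha> * OPT1 V E f b k \<le> OPT1 V E f b k"
      using mult_right_mono[OF \<alpha>le OPTnn] by simp
    ultimately show ?thesis by linarith
  next
    case False
    have Lle: "L \<le> length vs"
    proof (rule ccontr)
      assume "\<not> L \<le> length vs"
      hence lt: "length vs < L" by simp
      from False run(3) obtain v where v: "vg_argmax V E f (set vs) v"
        "card (insert v (set vs)) > b \<or> card (edges_of E (insert v (set vs))) > k" by blast
      have "v \<in> V" using v(1) unfolding vg_argmax_def by simp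
      hence vV: "insert v (set vs) \<subseteq> V" using vsV by simp
      have "card (insert v (set vs)) \<le> Suc (length vs)"
        using card_length[of vs] by (simp add: card_insert_if)
      hence c1: "card (insert v (set vs)) \<le> L" using lt by linarith
      have "card (edges_of E (insert v (set vs))) \<le> card (insert v (set vs)) * D"
        unfolding D_def using card_edges_le[OF _ vV finV] by simp
      also have "\<dots> \<le> L * D" using c1 by simp
      also have "\<dots> \<le> (k div D) * D" unfolding L_def by simp
      also have "\<dots> \<le> k" by simp
      finally show False using c1 v(2) unfolding L_def by linarith
    qed
    have "h Oc - h (set (take L vs)) \<le> (1 - 1 / real b) ^ L * h Oc" using iter Lle by blast
    moreover have "(1 - 1 / real b) ^ L \<le> exp (- (real L / real b))"
    proof -
      have "1 - 1 / real b \<le> exp (- (1 / real b))" using exp_ge_add_one_self[of "- (1/real b)"] by simp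
      hence "(1 - 1 / real b) ^ L \<le> exp (- (1 / real b)) ^ L"
        using assms(2) by (intro power_mono) auto
      also have "\<dots> = exp (- (real L / real b))" by (simp add: exp_of_nat_mult[symmetric])
      finally show ?thesis .
    qed
    ultimately have "h Oc - h (set (take L vs)) \<le> exp (- (real L / real b)) * h Oc"
      using hnn[of Oc] by (meson mult_right_mono order_trans)
    hence "\<alpha> * h Oc \<le> h (set (take L vs))" unfolding \<alpha>_def by (simp add: algebra_simps)
    also have "\<dots> \<le> h (set vs)" by (rule hmono) (meson set_take_subset)
    finally have "\<alpha> * h Oc \<le> h (set vs)" .
    moreover have "\<alpha> \<ge> 0" unfolding \<alpha>_def using assms(2) by simp
    ultimately show ?thesis using OPTle unfolding h_def
      by (meson mult_left_mono order_trans)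
  qed
  hence "f (edges_of E (set vs)) \<ge>
           (1 - exp (- min 1 (of_int \<lfloor>real k / real (max_degree V E)\<rfloor> / real b)))
             * OPT1 V E f b k" by (subst goal_eq)
  with feas show ?thesis by (rule conjI)
qed

end
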